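(* Let $g,h\in G_a$ be covered by $\widehat g,\widehat h\in\widehat G_a$ respectively. (1) If $g$ and $h$ both fix a point $x\in X$, then $\widehat{\mathrm{rot}}_{x,\alpha}(\widehat g\widehat h)=\widehat{\mathrm{rot}}_{x,\alpha}(\widehat g)+\widehat{\mathrm{rot}}_{x,\alpha}(\widehat h)$. (2) If $g$ and $h$ both preserve a Borel probability measure $\mu$ on $X$, then $\widehat{\mathrm{rot}}_{\mu,\alpha}(\widehat g\widehat h)=\widehat{\mathrm{rot}}_{\mu,\alpha}(\widehat g)+\widehat{\mathrm{rot}}_{\mu,\alpha}(\widehat h)$, provided each term exists.
   Context: $A$ is $\mathbb{Z}$ or the discrete group $\mathbb{R}$. $X$ is a path-connected space, $a\in\mathrm{H}^1(X;A)$, $\pi\colon\widehat X_a\to X$ a principal $A$-bundle with holonomy $a$, $T_r$ the action of $r\in A$. $\widehat G_a$ is the group of bundle automorphisms of $\widehat X_a$ (homeomorphisms $\widehat g$ with $\pi\circ\widehat g=g\circ\pi$ for a homeomorphism $g$ of $X$, said to cover $g$), and $G_a$ the group of homeomorphisms of $X$ preserving $a$. $\alpha$ is a real singular $1$-cocycle representing $a$, and $\theta\colon\widehat X_a\to\mathbb{R}$ a $0$-cochain with $d\theta=\pi^*\alpha$ and $\theta(T_r\widehat y)=\theta(\widehat y)+r$. For $x\in X$, $\rho_{x,\alpha}(\widehat g)=\theta(\widehat g(\widehat x))-\theta(\widehat x)$ with $\widehat x\in\pi^{-1}(x)$ (independent of choices); $\widehat{\mathrm{rot}}_{x,\alpha}(\widehat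 g)=\lim_{n\to\infty}\rho_{x,\alpha}(\widehat g^n)/n$ when it exists; for a $g$-invariant Borel probability measure $\mu$, $\widehat{\mathrm{rot}}_{\mu,\alpha}(\widehat g)=\int_X\rho_{x,\alpha}(\widehat g)\,d\mu(x)$ when it exists. *)

theory Defs
  imports "HOL-Analysis.Analysis" "HOL-Probability.Probability" "HOL-Homology.Homology"
begin

text \<open>The structure group A (Z or R with the discrete topology) is modelled as a subset
  of the reals, A = Z or A = UNIV. T r is the action of r in A on the total space.\<close>

definition principal_bundle ::
  "'a topology \<Rightarrow> 'b topology \<Rightarrow> ('b \<Rightarrow> 'a) \<Rightarrow> real set \<Rightarrow> (real \<Rightarrow> 'b \<Rightarrow> 'b) \<Rightarrow> bool" where
  "principal_bundle X Xh p A T \<longleftrightarrow>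
     continuous_map Xh X p \<and> p ` topspace Xh = topspace X \<and>
     (\<forall>r\<in>A. homeomorphic_map Xh Xh (T r)) \<and>
     (\<forall>y\<in>topspace Xh. T 0 y = y) \<and>
     (\<forall>r\<in>A. \<forall>s\<in>A. \<forall>y\<in>topspace Xh. T (r + s) y = T r (T s y)) \<and>
     (\<forall>r\<in>A. \<forall>y\<in>topspace Xh. p (T r y) = p y) \<and>
     (\<forall>y\<in>topspace Xh. \<forall>y'\<in>topspace Xh. p y = p y' \<longrightarrow> (\<exists>!r. r \<in> A \<and> y' = T r y)) \<and>
     (\<forall>x\<in>topspace X. \<exists>U s. openin X U \<and> x \<in> U \<and>
        continuous_map (subtopology X U) Xh s \<and> (\<forall>u\<in>U. p (s u) = u) \<and>
        homeomorphic_map (prod_topology (subtopology X U) (discrete_topology A))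
                         (subtopology Xh {y \<in> topspace Xh. p y \<in> U})
                         (\<lambda>(u, r). T r (s u)))"

definition covers ::
  "'a topology \<Rightarrow> 'b topology \<Rightarrow> ('b \<Rightarrow> 'a) \<Rightarrow> real set \<Rightarrow> (real \<Rightarrow> 'b \<Rightarrow> 'b)
     \<Rightarrow> ('b \<Rightarrow> 'b) \<Rightarrow> ('a \<Rightarrow> 'a) \<Rightarrow> bool" where
  "covers X Xh p A T gh g \<longleftrightarrow>
     homeomorphic_map Xh Xh gh \<and> homeomorphic_map X X g \<and>
     (\<forall>y\<in>topspace Xh. p (gh y) = g (p y)) \<and>
     (\<forall>r\<in>A. \<forall>y\<in>topspace Xh. gh (T r y) = T r (gh y))"

definition vtx0 :: "nat \<Rightarrow> real" where "vtx0 = (\<lambda>i. if i = 0 then 1 else 0)"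
definition vtx1 :: "nat \<Rightarrow> real" where "vtx1 = (\<lambda>i. if i = 1 then 1 else 0)"

definition cobd0 :: "('a \<Rightarrow> real) \<Rightarrow> ((nat \<Rightarrow> real) \<Rightarrow> 'a) \<Rightarrow> real" where
  "cobd0 f \<sigma> = f (\<sigma> vtx1) - f (\<sigma> vtx0)"

definition real_1cocycle :: "'a topology \<Rightarrow> (((nat \<Rightarrow> real) \<Rightarrow> 'a) \<Rightarrow> real) \<Rightarrow> bool" where
  "real_1cocycle X \<alpha> \<longleftrightarrow>
     (\<forall>\<tau>. singular_simplex 2 X \<tau> \<longrightarrow>
        \<alpha> (singular_face 2 0 \<tau>) - \<alpha> (singular_face 2 1 \<tau>) + \<alpha> (singular_face 2 2 \<tau>) = 0)"

definition preserves_class :: "'a topology \<Rightarrow> (((nat \<Rightarrow> real) \<Rightarrow> 'a) \<Rightarrow> real) \<Rightarrow> ('a \<Rightarrow> 'a) \<Rightarrow> bool" where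
  "preserves_class X \<alpha> g \<longleftrightarrow>
     (\<exists>f. \<forall>\<sigma>. singular_simplex 1 X \<sigma> \<longrightarrow> \<alpha> (simplex_map 1 g \<sigma>) - \<alpha> \<sigma> = cobd0 f \<sigma>)"

definition rho :: "'b topology \<Rightarrow> ('b \<Rightarrow> 'a) \<Rightarrow> ('b \<Rightarrow> real) \<Rightarrow> 'a \<Rightarrow> ('b \<Rightarrow> 'b) \<Rightarrow> real" where
  "rho Xh p \<theta> x gh = (let xh = (SOME y. y \<in> topspace Xh \<and> p y = x) in \<theta> (gh xh) - \<theta> xh)"

definition borel_sets_of :: "'a topology \<Rightarrow> 'a set set" where
  "borel_sets_of X = sigma_sets (topspace X) {U. openin X U}"

end

theory Submission
  imports Defs
begin

definition Pc :: "'b topology \<Rightarrow> real set \<Rightarrow> (real \<Rightarrow> 'b \<Rightarrow> 'b) \<Rightarrow> ('b \<Rightarrow> 'b) \<Rightarrow> bool" where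
  "Pc Xh A T F \<longleftrightarrow> (\<forall>y\<in>topspace Xh. F y \<in> topspace Xh) \<and>
     (\<forall>r\<in>A. \<forall>y\<in>topspace Xh. F (T r y) = T r (F y))"

lemma Pc_comp: "Pc Xh A T F \<Longrightarrow> Pc Xh A T G \<Longrightarrow> Pc Xh A T (F \<circ> G)"
  unfolding Pc_def by auto

lemma Pc_pow: "Pc Xh A T F \<Longrightarrow> Pc Xh A T (F ^^ n)"
proof (induction n)
  case 0 then show ?case by (simp add: Pc_def)
next
  case (Suc n) then show ?case using Pc_comp[of Xh A T F "F^^n"] by (simp add: comp_def)
qed

lemma Pc_cov: "covers X Xh p A T gh g \<Longrightarrow> Pc Xh A T gh"
proof -
  assume c: "covers X Xh p A T gh g"
  have hm: "homeomorphic_map Xh Xh gh" using c unfolding covers_def by (elim conjE)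
  have "gh ` topspace Xh = topspace Xh" using homeomorphic_imp_surjective_map[OF hm] .
  moreover have "\<forall>r\<in>A. \<forall>y\<in>topspace Xh. gh (T r y) = T r (gh y)"
    using c unfolding covers_def by (elim conjE)
  ultimately show ?thesis unfolding Pc_def by blast
qed

lemma rho_L:
  assumes pbun: "principal_bundle X Xh p A T"
    and theta_T: "\<forall>r\<in>A. \<forall>y\<in>topspace Xh. \<theta> (T r y) = \<theta> y + r"
    and P: "Pc Xh A T F" and y0: "y0 \<in> topspace Xh"
  shows "rho Xh p \<theta> (p y0) F = \<theta> (F y0) - \<theta> y0"
proof -
  define xh where "xh = (SOME y. y \<in> topspace Xh \<and> p y = p y0)"
  have xh: "xh \<in> topspace Xh \<and> p xh = p y0"
    unfolding xh_def by (rule someI[where x=y0]) (simp add: y0)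
  have U: "\<forall>y\<in>topspace Xh. \<forall>y'\<in>topspace Xh. p y = p y' \<longrightarrow> (\<exists>!r. r \<in> A \<and> y' = T r y)"
    using pbun unfolding principal_bundle_def by (elim conjE)
  then obtain r where r: "r \<in> A" "y0 = T r xh"
    using xh y0 by blast
  have "F y0 = T r (F xh)" using P r xh unfolding Pc_def by auto
  moreover have "F xh \<in> topspace Xh" using P xh unfolding Pc_def by auto
  ultimately have "\<theta> (F y0) = \<theta> (F xh) + r" using theta_T r by auto
  moreover have "\<theta> y0 = \<theta> xh + r" using theta_T r xh by auto
  ultimately show ?thesis unfolding rho_def xh_def[symmetric] Let_def by simp
qed

lemma rho_comp:
  assumes pbun: "principal_bundle X Xh p A T"
    and theta_T: "\<forall>r\<in>A. \<forall>y\<in>topspace Xh. \<theta> (T r y) = \<theta> y + r"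
    and PF: "Pc Xh A T F" and PG: "Pc Xh A T G" and x: "x \<in> topspace X"
  shows "rho Xh p \<theta> x (F \<circ> G) = rho Xh p \<theta> (p (G (SOME y. y \<in> topspace Xh \<and> p y = x))) F
           + rho Xh p \<theta> x G"
proof -
  define xh where "xh = (SOME y. y \<in> topspace Xh \<and> p y = x)"
  have "p ` topspace Xh = topspace X" using pbun unfolding principal_bundle_def by (elim conjE)
  then have "x \<in> p ` topspace Xh" using x by simp
  then obtain y1 where "y1 \<in> topspace Xh" "x = p y1" by (rule imageE)
  then have ex: "\<exists>y. y \<in> topspace Xh \<and> p y = x" by blast
  have xh: "xh \<in> topspace Xh \<and> p xh = x"
    unfolding xh_def using someI_ex[OF ex] .
  have G: "G xh \<in> topspace Xh" using PG xh unfolding Pc_def by blast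
  have r0: "rho Xh p \<theta> (p (G xh)) F = \<theta> (F (G xh)) - \<theta> (G xh)"
    by (rule rho_L[OF pbun theta_T PF G])
  have r1: "rho Xh p \<theta> x (F \<circ> G) = \<theta> (F (G xh)) - \<theta> xh"
    unfolding rho_def Let_def xh_def[symmetric] comp_def ..
  have r2: "rho Xh p \<theta> x G = \<theta> (G xh) - \<theta> xh"
    unfolding rho_def Let_def xh_def[symmetric] ..
  show ?thesis unfolding xh_def[symmetric] r0 r1 r2 by simp
qed

lemma some_fib:
  assumes pbun: "principal_bundle X Xh p A T" and x: "x \<in> topspace X"
  shows "(SOME y. y \<in> topspace Xh \<and> p y = x) \<in> topspace Xh \<and> p (SOME y. y \<in> topspace Xh \<and> p y = x) = x"
proof -
  have "p ` topspace Xh = topspace X" using pbun unfolding principal_bundle_def by (elim conjE)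
  then have "x \<in> p ` topspace Xh" using x by simp
  then obtain y1 where "y1 \<in> topspace Xh" "x = p y1" by (rule imageE)
  then have ex: "\<exists>y. y \<in> topspace Xh \<and> p y = x" by blast
  show ?thesis using someI_ex[OF ex] .
qed

lemma rho_pow:
  assumes pbun: "principal_bundle X Xh p A T"
    and theta_T: "\<forall>r\<in>A. \<forall>y\<in>topspace Xh. \<theta> (T r y) = \<theta> y + r"
    and PF: "Pc Xh A T F" and x: "x \<in> topspace X"
    and fxd: "p (F (SOME y. y \<in> topspace Xh \<and> p y = x)) = x"
  shows "rho Xh p \<theta> x (F ^^ n) = real n * rho Xh p \<theta> x F"
proof (induction n)
  case 0 then show ?case by (simp add: rho_def Let_def)
next
  case (Suc n)
  have "rho Xh p \<theta> x ((F ^^ n) \<circ> F) = rho Xh p \<theta> x (F ^^ n) + rho Xh p \<theta> x F"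
    using rho_comp[OF pbun theta_T Pc_pow[OF PF] PF x] fxd by simp
  then have eqS: "rho Xh p \<theta> x (F ^^ Suc n) = rho Xh p \<theta> x (F ^^ n) + rho Xh p \<theta> x F"
    by (simp only: funpow_Suc_right)
  show ?case by (subst eqS) (simp add: Suc.IH algebra_simps)
qed

lemma lim_lin: "(\<lambda>n. real n * c / real n) \<longlonglongrightarrow> (c::real)"
proof (rule Lim_transform_eventually[OF tendsto_const])
  show "\<forall>\<^sub>F n in sequentially. c = real n * c / real n"
    using eventually_gt_at_top[of "0::nat"] by eventually_elim simp
qed

theorem proposition2p8:
  fixes X :: "'a topology" and Xh :: "'b topology" and p :: "'b \<Rightarrow> 'a"
    and A :: "real set" and T :: "real \<Rightarrow> 'b \<Rightarrow> 'b"
    and \<alpha> :: "((nat \<Rightarrow> real) \<Rightarrow> 'a) \<Rightarrow> real" and \<theta> :: "'b \<Rightarrow> real"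
    and g h :: "'a \<Rightarrow> 'a" and gh hh :: "'b \<Rightarrow> 'b"
  assumes A: "A = \<int> \<or> A = UNIV"
    and X: "path_connected_space X"
    and pbun: "principal_bundle X Xh p A T"
    and cocycle: "real_1cocycle X \<alpha>"
    and theta_d: "\<forall>\<sigma>. singular_simplex 1 Xh \<sigma> \<longrightarrow> cobd0 \<theta> \<sigma> = \<alpha> (simplex_map 1 p \<sigma>)"
    and theta_T: "\<forall>r\<in>A. \<forall>y\<in>topspace Xh. \<theta> (T r y) = \<theta> y + r"
    and gGa: "preserves_class X \<alpha> g" and hGa: "preserves_class X \<alpha> h"
    and gcov: "covers X Xh p A T gh g" and hcov: "covers X Xh p A T hh h"
  shows
    "(\<forall>x\<in>topspace X. g x = x \<and> h x = x \<longrightarrow>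
        (\<exists>Lg Lh.
          (\<lambda>n. rho Xh p \<theta> x (gh ^^ n) / real n) \<longlonglongrightarrow> Lg \<and>
          (\<lambda>n. rho Xh p \<theta> x (hh ^^ n) / real n) \<longlonglongrightarrow> Lh \<and>
          (\<lambda>n. rho Xh p \<theta> x ((gh \<circ> hh) ^^ n) / real n) \<longlonglongrightarrow> Lg + Lh))
     \<and>
     (\<forall>M :: 'a measure.
        prob_space M \<and> space M = topspace X \<and> sets M = borel_sets_of X \<and>
        g \<in> measurable M M \<and> distr M M g = M \<and>
        h \<in> measurable M M \<and> distr M M h = M \<and>
        integrable M (\<lambda>x. rho Xh p \<theta> x gh) \<and>
        integrable M (\<lambda>x. rho Xh p \<theta> x hh) \<and>
        integrable M (\<lambda>x. rho Xh p \<theta> x (gh \<circ> hh))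
        \<longrightarrow>
        (\<integral>x. rho Xh p \<theta> x (gh \<circ> hh) \<partial>M) =
          (\<integral>x. rho Xh p \<theta> x gh \<partial>M) + (\<integral>x. rho Xh p \<theta> x hh \<partial>M))"
proof (intro conjI ballI impI allI)
  have Pg: "Pc Xh A T gh" by (rule Pc_cov[OF gcov])
  have Ph: "Pc Xh A T hh" by (rule Pc_cov[OF hcov])
  have pg: "\<And>y. y \<in> topspace Xh \<Longrightarrow> p (gh y) = g (p y)" using gcov unfolding covers_def by blast
  have ph: "\<And>y. y \<in> topspace Xh \<Longrightarrow> p (hh y) = h (p y)" using hcov unfolding covers_def by blast
  have comp: "rho Xh p \<theta> x (gh \<circ> hh) = rho Xh p \<theta> (h x) gh + rho Xh p \<theta> x hh"
    if x: "x \<in> topspace X" for x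
  proof -
    have s: "p (hh (SOME y. y \<in> topspace Xh \<and> p y = x)) = h x"
      using some_fib[OF pbun x] ph by metis
    show ?thesis using rho_comp[OF pbun theta_T Pg Ph x] unfolding s .
  qed
  {
    fix x assume x: "x \<in> topspace X" and fx: "g x = x \<and> h x = x"
    let ?xh = "SOME y. y \<in> topspace Xh \<and> p y = x"
    have xh: "?xh \<in> topspace Xh" "p ?xh = x" using some_fib[OF pbun x] by auto
    have hxh: "hh ?xh \<in> topspace Xh" using Ph xh unfolding Pc_def by blast
    have f1: "p (gh ?xh) = x" using pg[OF xh(1)] xh(2) fx by simp
    have f2: "p (hh ?xh) = x" using ph[OF xh(1)] xh(2) fx by simp
    have f3: "p ((gh \<circ> hh) ?xh) = x" using pg[OF hxh] f2 fx by simp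
    have e1: "\<And>n. rho Xh p \<theta> x (gh ^^ n) = real n * rho Xh p \<theta> x gh"
      by (rule rho_pow[OF pbun theta_T Pg x f1])
    have e2: "\<And>n. rho Xh p \<theta> x (hh ^^ n) = real n * rho Xh p \<theta> x hh"
      by (rule rho_pow[OF pbun theta_T Ph x f2])
    have e3: "\<And>n. rho Xh p \<theta> x ((gh \<circ> hh) ^^ n) = real n * rho Xh p \<theta> x (gh \<circ> hh)"
      by (rule rho_pow[OF pbun theta_T Pc_comp[OF Pg Ph] x f3])
    have c: "rho Xh p \<theta> x (gh \<circ> hh) = rho Xh p \<theta> x gh + rho Xh p \<theta> x hh"
      using comp[OF x] fx by simp
    show "\<exists>Lg Lh.
          (\<lambda>n. rho Xh p \<theta> x (gh ^^ n) / real n) \<longlonglongrightarrow> Lg \<and>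
          (\<lambda>n. rho Xh p \<theta> x (hh ^^ n) / real n) \<longlonglongrightarrow> Lh \<and>
          (\<lambda>n. rho Xh p \<theta> x ((gh \<circ> hh) ^^ n) / real n) \<longlonglongrightarrow> Lg + Lh"
      unfolding e1 e2 e3 c
      using lim_lin[of "rho Xh p \<theta> x gh"] lim_lin[of "rho Xh p \<theta> x hh"]
        lim_lin[of "rho Xh p \<theta> x (gh \<circ> hh)"] unfolding c by blast
  }
  fix M :: "'a measure"
  assume H: "prob_space M \<and> space M = topspace X \<and> sets M = borel_sets_of X \<and>
        g \<in> measurable M M \<and> distr M M g = M \<and>
        h \<in> measurable M M \<and> distr M M h = M \<and>
        integrable M (\<lambda>x. rho Xh p \<theta> x gh) \<and>
        integrable M (\<lambda>x. rho Xh p \<theta> x hh) \<and>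
        integrable M (\<lambda>x. rho Xh p \<theta> x (gh \<circ> hh))"
  let ?f = "\<lambda>x. rho Xh p \<theta> x gh"
  have hm: "h \<in> measurable M M" and dh: "distr M M h = M" and ig: "integrable M ?f"
    and ih: "integrable M (\<lambda>x. rho Xh p \<theta> x hh)" and sp: "space M = topspace X"
    using H by blast+
  have fm: "?f \<in> borel_measurable M" using ig by (rule borel_measurable_integrable)
  have igh: "integrable M (\<lambda>x. ?f (h x))"
    using integrable_distr_eq[OF hm fm] ig dh by simp
  have eq: "(\<integral>x. ?f (h x) \<partial>M) = (\<integral>x. ?f x \<partial>M)"
    using integral_distr[OF hm fm] dh by simp
  have "(\<integral>x. rho Xh p \<theta> x (gh \<circ> hh) \<partial>M) = (\<integral>x. ?f (h x) + rho Xh p \<theta> x hh \<partial>M)"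
    by (rule Bochner_Integration.integral_cong) (simp_all only: sp comp)
  also have "\<dots> = (\<integral>x. ?f (h x) \<partial>M) + (\<integral>x. rho Xh p \<theta> x hh \<partial>M)"
    by (rule Bochner_Integration.integral_add[OF igh ih])
  finally show "(\<integral>x. rho Xh p \<theta> x (gh \<circ> hh) \<partial>M) =
          (\<integral>x. rho Xh p \<theta> x gh \<partial>M) + (\<integral>x. rho Xh p \<theta> x hh \<partial>M)" using eq by simp
qed

end
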